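(* Let $N,a,d,q$ be positive integers and let $-1/2\leq\kappa\leq 1/2$. Then $$\widehat{F_{N,d}}\Big(\frac aq+\kappa\Big)=\frac{1}{\phi(dq)}\sum_{\chi \bmod dq} e\Big(\frac{\kappa}{d}\Big) S_{dN+1}\Big(\frac{\kappa}{d},\chi\Big)G_{a,q,d,\chi}+O\big(\log(dN)\log q\big),$$ where the sum is over all Dirichlet characters modulo $dq$, and the implied constant is absolute.
   Context: $e(\theta)=e^{2\pi i\theta}$. For $f\in\ell^1(\mathbb Z)$, $\widehat f(\theta)=\sum_{x\in\mathbb Z}f(x)e(-x\theta)$ for $\theta\in\mathbb T=\mathbb R/\mathbb Z$. $\Lambda$ is the von Mangoldt function and $\phi$ Euler's totient function. For positive integers $N,d$, $F_{N,d}(n)=\Lambda(dn+1)1_{[N]}(n)$, where $1_{[N]}$ is the indicator of $\{1,\dots,N\}$. For a Dirichlet character $\chi$, real $x$ and $\delta$, $S_x(\delta,\chi)=\sum_{n\leq x}\Lambda(n)\chi(n)e(-n\delta)$. For a Dirichlet character $\chi$ modulo $dq$, $G_{a,q,d,\chi}=\sum_{m=0}^{q-1}e(-am/q)\overline{\chi}(dm+1)$. *)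

theory Defs
  imports "HOL-Analysis.Analysis" "HOL-Number_Theory.Number_Theory"
begin

definition e :: "real \<Rightarrow> complex" where
  "e \<theta> = cis (2 * pi * \<theta>)"

definition dirichlet_char :: "nat \<Rightarrow> (nat \<Rightarrow> complex) \<Rightarrow> bool" where
  "dirichlet_char m \<psi> \<longleftrightarrow> m > 0 \<and> \<psi> 1 = 1 \<and>
     (\<forall>a b. \<psi> (a * b) = \<psi> a * \<psi> b) \<and>
     (\<forall>n. \<psi> (n + m) = \<psi> n) \<and>
     (\<forall>n. \<psi> n = 0 \<longleftrightarrow> \<not> coprime n m)"

definition dchars :: "nat \<Rightarrow> (nat \<Rightarrow> complex) set" where
  "dchars m = {\<psi>. dirichlet_char m \<psi>}"

text \<open>Fourier transform of F_{N,d}(n) = Lambda(dn+1) 1_[N](n).\<close>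
definition F_hat :: "nat \<Rightarrow> nat \<Rightarrow> real \<Rightarrow> complex" where
  "F_hat N d \<theta> = (\<Sum>n\<in>{1..N}. mangoldt (d * n + 1) * e (- real n * \<theta>))"

definition S_sum :: "real \<Rightarrow> real \<Rightarrow> (nat \<Rightarrow> complex) \<Rightarrow> complex" where
  "S_sum x \<delta> \<psi> = (\<Sum>n\<in>{1..nat \<lfloor>x\<rfloor>}. mangoldt n * \<psi> n * e (- real n * \<delta>))"

definition G_sum :: "nat \<Rightarrow> nat \<Rightarrow> nat \<Rightarrow> (nat \<Rightarrow> complex) \<Rightarrow> complex" where
  "G_sum a q d \<psi> = (\<Sum>m<q. e (- real a * real m / real q) * cnj (\<psi> (d * m + 1)))"

end

theory Submission
  imports Defs "HOL-Algebra.Multiplicative_Group"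
begin

definition ischar :: "('a, 'b) monoid_scheme \<Rightarrow> 'a set \<Rightarrow> ('a \<Rightarrow> complex) \<Rightarrow> bool" where
  "ischar G H c \<longleftrightarrow> (\<forall>x\<in>H. c x \<noteq> 0) \<and> (\<forall>x\<in>H. \<forall>y\<in>H. c (x \<otimes>\<^bsub>G\<^esub> y) = c x * c y)"

context comm_group begin

lemma ischar_one:
  assumes "ischar G H c" "subgroup H G" shows "c \<one> = 1"
proof -
  have h: "\<one> \<in> H" using assms(2) by (simp add: subgroup.one_closed)
  have "c (\<one> \<otimes> \<one>) = c \<one> * c \<one>" using assms(1) h unfolding ischar_def by blast
  moreover have "c \<one> \<noteq> 0" using assms(1) h unfolding ischar_def by blast
  ultimately show ?thesis by simp
qed

lemma char_extend_step:
  assumes H: "subgroup H G" and ch: "ischar G H c"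
    and g: "g \<in> carrier G" and k: "0 < k" "g [^] k \<in> H"
    and kmin: "\<And>j. 0 < j \<Longrightarrow> j < k \<Longrightarrow> g [^] j \<notin> H"
    and w: "w ^ k = c (g [^] k)"
  shows "\<exists>H' cc. subgroup H' G \<and> H \<subseteq> H' \<and> g \<in> H' \<and> ischar G H' cc \<and> (\<forall>x\<in>H. cc x = c x) \<and> cc g = w"
proof -
  have Hc: "H \<subseteq> carrier G" using subgroup.subset[OF H] .
  have Hm: "\<And>a b. a \<in> H \<Longrightarrow> b \<in> H \<Longrightarrow> a \<otimes> b \<in> H" using subgroup.m_closed[OF H] .
  have Hi: "\<And>a. a \<in> H \<Longrightarrow> inv a \<in> H" using subgroup.m_inv_closed[OF H] .
  have H1: "\<one> \<in> H" using subgroup.one_closed[OF H] .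
  have Hpow: "x [^] (n::nat) \<in> H" if "x \<in> H" for x n
  proof (induction n)
    case 0 show ?case using H1 by simp
  next
    case (Suc n) then show ?case using Hm that by simp
  qed
  have ch0: "\<And>x. x \<in> H \<Longrightarrow> c x \<noteq> 0" and chm: "\<And>x y. x \<in> H \<Longrightarrow> y \<in> H \<Longrightarrow> c (x \<otimes> y) = c x * c y"
    using ch unfolding ischar_def by blast+
  have ch1: "c \<one> = 1" using ischar_one[OF ch H] .
  have w0: "w \<noteq> 0" using w k ch0 by (metis power_0_left less_not_refl2)
  have main: "i = j" if hh: "h1 \<in> H" "h2 \<in> H" "i < k" "j < k" "h1 \<otimes> g [^] i = h2 \<otimes> g [^] j" "j \<le> i"
    for h1 h2 i j
  proof (rule ccontr)
    assume ne: "i \<noteq> j"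
    have h1c: "h1 \<in> carrier G" and h2c: "h2 \<in> carrier G" using hh Hc by auto
    have "g [^] i = g [^] (i - j) \<otimes> g [^] j" using nat_pow_mult[OF g, of "i-j" j] hh(6) by simp
    hence "(h1 \<otimes> g [^] (i - j)) \<otimes> g [^] j = h2 \<otimes> g [^] j" using hh(5) h1c g by (simp add: m_assoc)
    hence "h1 \<otimes> g [^] (i - j) = h2" using h1c h2c g by simp
    hence "g [^] (i - j) = inv h1 \<otimes> h2" using h1c h2c g by (metis inv_solve_left nat_pow_closed)
    hence "g [^] (i - j) \<in> H" using Hm Hi hh by simp
    moreover have "0 < i - j" "i - j < k" using ne hh by auto
    ultimately show False using kmin by blast
  qed
  have uniq: "i = j \<and> h1 = h2" if hh: "h1 \<in> H" "h2 \<in> H" "i < k" "j < k" "h1 \<otimes> g [^] i = h2 \<otimes> g [^] j"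
    for h1 h2 i j
  proof -
    have "i = j" using main[OF hh] main[OF hh(2,1,4,3) hh(5)[symmetric]] by linarith
    moreover have "h1 \<in> carrier G" "h2 \<in> carrier G" using hh Hc by auto
    ultimately show ?thesis using hh g right_cancel[of "g [^] j" h1 h2] by simp
  qed
  define H' where "H' = {h \<otimes> g [^] j | h j. h \<in> H \<and> j < k}"
  define cc where "cc x = (SOME v. \<exists>h j. h \<in> H \<and> j < k \<and> x = h \<otimes> g [^] j \<and> v = c h * w ^ j)" for x
  have chi'_small: "cc (h \<otimes> g [^] j) = c h * w ^ j" if "h \<in> H" "j < k" for h j
  proof -
    have "\<exists>h' j'. h' \<in> H \<and> j' < k \<and> h \<otimes> g [^] j = h' \<otimes> g [^] j' \<and> cc (h \<otimes> g [^] j) = c h' * w ^ j'"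
      unfolding cc_def by (rule someI_ex) (use that in blast)
    then obtain h' j' where "h' \<in> H" "j' < k" "h \<otimes> g [^] j = h' \<otimes> g [^] j'" "cc (h \<otimes> g [^] j) = c h' * w ^ j'"
      by blast
    with uniq[OF that(1) this(1) that(2) this(2,3)] show ?thesis by simp
  qed
  have gen: "h \<otimes> g [^] j \<in> H' \<and> cc (h \<otimes> g [^] j) = c h * w ^ j" if "h \<in> H" for h j
    using that
  proof (induction j arbitrary: h rule: less_induct)
    case (less j)
    show ?case
    proof (cases "j < k")
      case True
      then show ?thesis using chi'_small[OF less.prems True] less.prems unfolding H'_def by blast
    next
      case False
      have hc: "h \<in> carrier G" using less.prems Hc by auto
      have eq: "h \<otimes> g [^] j = (h \<otimes> g [^] k) \<otimes> g [^] (j - k)"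
        using False hc g by (simp add: m_assoc nat_pow_mult)
      have hk: "h \<otimes> g [^] k \<in> H" using Hm less.prems k by blast
      have "j - k < j" using k False by simp
      from less.IH[OF this hk] eq
      have "h \<otimes> g [^] j \<in> H' \<and> cc (h \<otimes> g [^] j) = c h * c (g [^] k) * w ^ (j - k)"
        using chm less.prems k by simp
      also have "c h * c (g [^] k) * w ^ (j - k) = c h * w ^ j"
        using False by (simp add: w[symmetric] power_add[symmetric] mult.assoc)
      finally show ?thesis .
    qed
  qed
  have H'c: "H' \<subseteq> carrier G" unfolding H'_def using Hc g by auto
  have H'mem: "x \<in> H' \<longleftrightarrow> (\<exists>h j. h \<in> H \<and> j < k \<and> x = h \<otimes> g [^] j)" for x
    unfolding H'_def by blast
  have mult_eq: "(h1 \<otimes> g [^] i) \<otimes> (h2 \<otimes> g [^] j) = (h1 \<otimes> h2) \<otimes> g [^] (i + j)"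
    if "h1 \<in> carrier G" "h2 \<in> carrier G" for h1 h2 and i j :: nat
    using that g by (simp add: m_ac nat_pow_mult[symmetric])
  have sub: "subgroup H' G"
  proof (rule subgroupI)
    show "H' \<subseteq> carrier G" by fact
    show "H' \<noteq> {}" using gen[OF H1, of 0] by blast
  next
    fix a assume "a \<in> H'"
    then obtain h j where hj: "h \<in> H" "a = h \<otimes> g [^] j" "j < k" using H'mem by blast
    have hc: "h \<in> carrier G" using hj Hc by auto
    define y where "y = (inv h \<otimes> inv ((g [^] k) [^] j)) \<otimes> g [^] (k * j - j)"
    have yH: "y \<in> H'" unfolding y_def
      using gen[of "inv h \<otimes> inv ((g [^] k) [^] j)" "k*j - j"] Hi Hm hj k
      by (meson Hpow)
    have lc1: "x \<otimes> (inv x \<otimes> z) = z" "inv x \<otimes> (x \<otimes> z) = z"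
      if "x \<in> carrier G" "z \<in> carrier G" for x z
      using that by (simp_all add: m_assoc[symmetric])
    have "y \<otimes> a = \<one>"
    proof -
      have "k * j = (k * j - j) + j" using k by (simp add: le_add_diff_inverse2)
      hence e1: "g [^] (k * j - j) \<otimes> g [^] j = (g [^] k) [^] j"
        using g by (metis nat_pow_mult nat_pow_pow)
      have "y \<otimes> a = (inv h \<otimes> h) \<otimes> (inv ((g [^] k) [^] j) \<otimes> (g [^] (k * j - j) \<otimes> g [^] j))"
        unfolding y_def hj using hc g by (simp add: m_ac lc1)
      also have "\<dots> = \<one>" using e1 hc g by simp
      finally show ?thesis .
    qed
    hence "inv a = y" using inv_equality yH H'c hj hc g by auto
    thus "inv a \<in> H'" using yH by simp
  next
    fix a b assume "a \<in> H'" "b \<in> H'"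
    then obtain h1 i h2 j where "h1 \<in> H" "a = h1 \<otimes> g [^] i" "h2 \<in> H" "b = h2 \<otimes> g [^] j" "i < k" "j < k"
      using H'mem by metis
    moreover then have "h1 \<in> carrier G" "h2 \<in> carrier G" using Hc by auto
    ultimately have "a \<otimes> b = (h1 \<otimes> h2) \<otimes> g [^] (i + j)" "h1 \<otimes> h2 \<in> H" using mult_eq[of h1 h2 i j] Hm by auto
    then show "a \<otimes> b \<in> H'" using gen by metis
  qed
  have chr: "ischar G H' cc"
    unfolding ischar_def
  proof safe
    fix x assume "x \<in> H'" "cc x = 0"
    then obtain h j where "h \<in> H" "x = h \<otimes> g [^] j" "j < k" using H'mem by blast
    then show False using gen ch0 w0 \<open>cc x = 0\<close> by auto
  next
    fix a b assume "a \<in> H'" "b \<in> H'"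
    then obtain h1 i h2 j where hh: "h1 \<in> H" "a = h1 \<otimes> g [^] i" "h2 \<in> H" "b = h2 \<otimes> g [^] j" "i < k" "j < k"
      using H'mem by metis
    have "h1 \<in> carrier G" "h2 \<in> carrier G" using hh Hc by auto
    then have "a \<otimes> b = (h1 \<otimes> h2) \<otimes> g [^] (i + j)" "h1 \<otimes> h2 \<in> H" using hh mult_eq[of h1 h2 i j] Hm by auto
    then have "cc (a \<otimes> b) = c (h1 \<otimes> h2) * w ^ (i + j)"
      using gen by metis
    also have "\<dots> = (c h1 * w ^ i) * (c h2 * w ^ j)" using chm hh by (simp add: power_add)
    also have "\<dots> = cc a * cc b" using gen hh by simp
    finally show "cc (a \<otimes> b) = cc a * cc b" .
  qed
  have ext: "\<forall>x\<in>H. cc x = c x"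
  proof
    fix x assume "x \<in> H"
    then show "cc x = c x" using gen[of x 0] Hc by auto
  qed
  have gH': "g \<in> H'" and gw: "cc g = w" using gen[OF H1, of 1] ch1 g by auto
  have "H \<subseteq> H'" using gen[of _ 0] Hc by force
  then show ?thesis using sub chr ext gH' gw by blast
qed


lemma char_extend_full:
  assumes fin: "finite (carrier G)"
  shows "subgroup H G \<Longrightarrow> ischar G H c \<Longrightarrow> \<exists>c'. ischar G (carrier G) c' \<and> (\<forall>x\<in>H. c' x = c x)"
proof (induction "card (carrier G - H)" arbitrary: H c rule: less_induct)
  case less
  show ?case
  proof (cases "H = carrier G")
    case True then show ?thesis using less.prems by blast
  next
    case False
    have Hc: "H \<subseteq> carrier G" using subgroup.subset[OF less.prems(1)] .
    then obtain g where g: "g \<in> carrier G" "g \<notin> H" using False by blast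
    have ex: "\<exists>j::nat. 0 < j \<and> g [^] j \<in> H"
      using ord_ge_1[OF fin g(1)] pow_ord_eq_1[OF g(1)] subgroup.one_closed[OF less.prems(1)]
      by (intro exI[of _ "ord g"]) auto
    define k where "k = (LEAST j::nat. 0 < j \<and> g [^] j \<in> H)"
    have k: "0 < k" "g [^] k \<in> H" using LeastI_ex[OF ex] unfolding k_def by auto
    have kmin: "g [^] j \<notin> H" if "0 < j" "j < k" for j :: nat
      using not_less_Least[of j "\<lambda>j::nat. 0 < j \<and> g [^] j \<in> H"] that unfolding k_def by auto
    define z where "z = c (g [^] k)"
    have z0: "z \<noteq> 0" using less.prems(2) k unfolding ischar_def z_def by blast
    define w where "w = exp (Ln z / of_nat k)"
    have w: "w ^ k = c (g [^] k)"
    proof -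
      have "w ^ k = exp (of_nat k * (Ln z / of_nat k))" unfolding w_def by (simp only: exp_of_nat_mult)
      also have "\<dots> = exp (Ln z)" using k by simp
      also have "\<dots> = z" using z0 by simp
      finally show ?thesis unfolding z_def .
    qed
    obtain H' c' where H': "subgroup H' G" "H \<subseteq> H'" "g \<in> H'" "ischar G H' c'" "\<forall>x\<in>H. c' x = c x"
      using char_extend_step[OF less.prems(1,2) g(1) k kmin w] by blast
    have "card (carrier G - H') < card (carrier G - H)"
    proof (rule psubset_card_mono)
      show "finite (carrier G - H)" using fin by simp
      show "carrier G - H' \<subset> carrier G - H" using H' g subgroup.subset[OF H'(1)] by blast
    qed
    from less.hyps[OF this H'(1,4)] obtain c'' where c'': "ischar G (carrier G) c''" "\<forall>x\<in>H'. c'' x = c' x"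
      by blast
    show ?thesis
    proof (rule exI[of _ c''], intro conjI ballI)
      show "ischar G (carrier G) c''" by (rule c''(1))
      fix x assume xH: "x \<in> H"
      then have "x \<in> H'" using H'(2) by (rule subsetD[rotated])
      then have "c'' x = c' x" using c''(2) by (rule bspec[rotated])
      also have "c' x = c x" using H'(5) xH by (rule bspec)
      finally show "c'' x = c x" .
    qed
  qed
qed

lemma char_separate:
  assumes fin: "finite (carrier G)" and x: "x \<in> carrier G" "x \<noteq> \<one>"
  shows "\<exists>c. ischar G (carrier G) c \<and> c x \<noteq> 1"
proof -
  have H: "subgroup {\<one>} G" by (rule triv_subgroup)
  have ch: "ischar G {\<one>} (\<lambda>_. 1)" unfolding ischar_def by simp
  have ex: "\<exists>j::nat. 0 < j \<and> x [^] j \<in> {\<one>}"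
    using ord_ge_1[OF fin x(1)] pow_ord_eq_1[OF x(1)] by (intro exI[of _ "ord x"]) auto
  define k where "k = (LEAST j::nat. 0 < j \<and> x [^] j \<in> {\<one>})"
  have k: "0 < k" "x [^] k \<in> {\<one>}" using LeastI_ex[OF ex] unfolding k_def by auto
  have kmin: "x [^] j \<notin> {\<one>}" if "0 < j" "j < k" for j :: nat
    using not_less_Least[of j "\<lambda>j::nat. 0 < j \<and> x [^] j \<in> {\<one>}"] that unfolding k_def by auto
  have x1: "x [^] (1::nat) = x" using x(1) by (metis One_nat_def nat_pow_Suc nat_pow_0 l_one)
  have k1: "k \<noteq> 1" using k x x1 by auto
  define w where "w = cis (2 * pi / real k)"
  have w: "w ^ k = (\<lambda>_. 1) (x [^] k)"
  proof -
    have "w ^ k = cis (real k * (2 * pi / real k))" unfolding w_def by (rule Complex.DeMoivre)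
    also have "real k * (2 * pi / real k) = 2 * pi" using k by simp
    finally show ?thesis by simp
  qed
  have w1: "w \<noteq> 1"
  proof
    assume "w = 1"
    hence "cos (2 * pi / real k) = 1" unfolding w_def by (metis cis.sel(1) one_complex.sel(1))
    then obtain n :: int where n: "2 * pi / real k = real_of_int n * 2 * pi" using cos_one_2pi_int by auto
    have "real_of_int n * real k = 1" using n k by (simp add: field_simps)
    hence "int k * n = 1" by (metis mult.commute of_int_eq_1_iff of_int_mult of_int_of_nat_eq)
    hence "int k = 1" using k pos_zmult_eq_1_iff[of "int k" n] by simp
    thus False using k1 by simp
  qed
  obtain H' c' where H': "subgroup H' G" "x \<in> H'" "ischar G H' c'" "c' x = w"
    using char_extend_step[OF H ch x(1) k kmin w] by blast
  obtain c'' where "ischar G (carrier G) c''" "\<forall>y\<in>H'. c'' y = c' y"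
    using char_extend_full[OF fin H'(1,3)] by blast
  then show ?thesis using H' w1 by auto
qed

end

definition Um :: "nat \<Rightarrow> nat monoid" where
  "Um m = \<lparr>carrier = {x. x < m \<and> coprime x m}, mult = (\<lambda>x y. (x * y) mod m), one = 1 mod m\<rparr>"

lemma Um_simps [simp]:
  "carrier (Um m) = {x. x < m \<and> coprime x m}"
  "x \<otimes>\<^bsub>Um m\<^esub> y = (x * y) mod m"
  "\<one>\<^bsub>Um m\<^esub> = 1 mod m"
  by (simp_all add: Um_def)

lemma Um_comm_group:
  assumes m: "m > 0" shows "comm_group (Um m)"
proof (rule comm_groupI)
  fix x y assume "x \<in> carrier (Um m)" "y \<in> carrier (Um m)"
  then show "x \<otimes>\<^bsub>Um m\<^esub> y \<in> carrier (Um m)" using m by simp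
next
  show "\<one>\<^bsub>Um m\<^esub> \<in> carrier (Um m)" using m by simp
next
  fix x y z assume "x \<in> carrier (Um m)" "y \<in> carrier (Um m)" "z \<in> carrier (Um m)"
  show "x \<otimes>\<^bsub>Um m\<^esub> y \<otimes>\<^bsub>Um m\<^esub> z = x \<otimes>\<^bsub>Um m\<^esub> (y \<otimes>\<^bsub>Um m\<^esub> z)"
    by (simp add: mod_mult_left_eq mod_mult_right_eq mult.assoc)
next
  fix x y show "x \<otimes>\<^bsub>Um m\<^esub> y = y \<otimes>\<^bsub>Um m\<^esub> x" by (simp add: mult.commute)
next
  fix x assume "x \<in> carrier (Um m)"
  then show "\<one>\<^bsub>Um m\<^esub> \<otimes>\<^bsub>Um m\<^esub> x = x" by (simp add: mod_mult_left_eq)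
next
  fix x assume x: "x \<in> carrier (Um m)"
  then have cx: "coprime x m" by simp
  obtain y0 where y0: "[x * y0 = Suc 0] (mod m)" using cong_solve_coprime_nat[OF cx] by blast
  have "coprime (x * y0) m" using cong_imp_coprime[OF cong_sym[OF y0]] by simp
  then have cy: "coprime y0 m" by simp
  show "\<exists>y\<in>carrier (Um m). y \<otimes>\<^bsub>Um m\<^esub> x = \<one>\<^bsub>Um m\<^esub>"
  proof (intro bexI)
    show "y0 mod m \<in> carrier (Um m)" using m cy by simp
    show "y0 mod m \<otimes>\<^bsub>Um m\<^esub> x = \<one>\<^bsub>Um m\<^esub>"
      using y0 by (simp add: cong_def mod_mult_left_eq mod_mult_right_eq mult.commute)
  qed
qed

lemma finite_Um [simp]: "finite (carrier (Um m))" by simp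

lemma dchar_separate:
  assumes m: "m > 0" and x: "coprime x m" "\<not> [x = 1] (mod m)"
  shows "\<exists>\<psi>\<in>dchars m. \<psi> x \<noteq> 1"
proof -
  interpret U: comm_group "Um m" by (rule Um_comm_group[OF m])
  have xc: "x mod m \<in> carrier (Um m)" using m x by simp
  have x1: "x mod m \<noteq> \<one>\<^bsub>Um m\<^esub>" using x(2) by (simp add: cong_def)
  obtain c where c: "ischar (Um m) (carrier (Um m)) c" "c (x mod m) \<noteq> 1"
    using U.char_separate[OF finite_Um xc x1] by blast
  have c0: "\<And>y. y \<in> carrier (Um m) \<Longrightarrow> c y \<noteq> 0"
    and cm: "\<And>y z. y \<in> carrier (Um m) \<Longrightarrow> z \<in> carrier (Um m) \<Longrightarrow> c ((y * z) mod m) = c y * c z"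
    using c(1) unfolding ischar_def by auto
  have c1: "c (1 mod m) = 1" using U.ischar_one[OF c(1) U.subgroup_self] by simp
  define \<psi> where "\<psi> n = (if coprime n m then c (n mod m) else 0)" for n
  have "dirichlet_char m \<psi>"
    unfolding dirichlet_char_def
  proof (intro conjI allI)
    show "0 < m" by fact
    show "\<psi> 1 = 1" using c1 by (simp add: \<psi>_def)
  next
    fix a b
    show "\<psi> (a * b) = \<psi> a * \<psi> b"
    proof (cases "coprime a m \<and> coprime b m")
      case True
      have "c ((a * b) mod m) = c (((a mod m) * (b mod m)) mod m)" by (simp add: mod_mult_eq)
      also have "\<dots> = c (a mod m) * c (b mod m)" using cm[of "a mod m" "b mod m"] True m by simp
      finally show ?thesis using True by (simp add: \<psi>_def)
    next
      case False then show ?thesis by (auto simp: \<psi>_def)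
    qed
  next
    fix n
    have "coprime (n + m) m \<longleftrightarrow> coprime n m"
      using m coprime_mod_left_iff[of m "n + m"] coprime_mod_left_iff[of m n] by simp
    then show "\<psi> (n + m) = \<psi> n" by (simp add: \<psi>_def)
  next
    fix n
    show "(\<psi> n = 0) = (\<not> coprime n m)" using c0[of "n mod m"] m by (simp add: \<psi>_def)
  qed
  moreover have "\<psi> x \<noteq> 1" using c(2) x by (simp add: \<psi>_def)
  ultimately show ?thesis unfolding dchars_def by blast
qed

context
  fixes m :: nat and \<psi> :: "nat \<Rightarrow> complex"
  assumes dc: "dirichlet_char m \<psi>"
begin

lemma dc_pos: "m > 0" using dc by (simp add: dirichlet_char_def)
lemma dc_one: "\<psi> 1 = 1" using dc by (simp add: dirichlet_char_def)
lemma dc_mult: "\<psi> (a * b) = \<psi> a * \<psi> b" using dc by (simp add: dirichlet_char_def)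
lemma dc_zero_iff: "\<psi> n = 0 \<longleftrightarrow> \<not> coprime n m" using dc by (simp add: dirichlet_char_def)
lemma dc_per: "\<psi> (n + m) = \<psi> n" using dc by (simp add: dirichlet_char_def)

lemma dc_per_mult: "\<psi> (r + m * t) = \<psi> r"
proof (induction t)
  case 0 then show ?case by simp
next
  case (Suc t)
  have "r + m * Suc t = (r + m * t) + m" by simp
  then have "\<psi> (r + m * Suc t) = \<psi> ((r + m * t) + m)" by (rule arg_cong)
  also have "\<dots> = \<psi> (r + m * t)" by (rule dc_per)
  finally show ?case using Suc by simp
qed

lemma dc_mod: "\<psi> n = \<psi> (n mod m)"
  using dc_per_mult[of "n mod m" "n div m"] by simp

lemma dc_cong: "[a = b] (mod m) \<Longrightarrow> \<psi> a = \<psi> b"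
  by (metis cong_def dc_mod)

lemma dc_pow: "\<psi> (a ^ n) = \<psi> a ^ n"
proof (induction n)
  case 0 show ?case using dc_one by simp
next
  case (Suc n) then show ?case by (simp add: dc_mult)
qed

lemma dc_norm: assumes "coprime b m" shows "norm (\<psi> b) = 1"
proof -
  have "[b ^ totient m = 1] (mod m)" by (rule euler_theorem[OF assms])
  then have "\<psi> b ^ totient m = 1" using dc_cong dc_pow dc_one by metis
  then have "norm (\<psi> b) ^ totient m = 1 ^ totient m" by (metis norm_one norm_power power_one)
  moreover have "totient m > 0" using dc_pos by simp
  ultimately show ?thesis using power_eq_imp_eq_base by (metis norm_ge_zero zero_le_one)
qed

lemma dc_cnj: assumes "coprime b m" shows "cnj (\<psi> b) * \<psi> b = 1"
proof -
  have "complex_of_real ((norm (\<psi> b))\<^sup>2) = \<psi> b * cnj (\<psi> b)" by (rule complex_norm_square)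
  then show ?thesis using dc_norm[OF assms] by (simp add: mult.commute)
qed

lemma dc_root: "\<psi> n \<in> insert 0 {z. z ^ totient m = 1}"
proof (cases "coprime n m")
  case True
  have "[n ^ totient m = 1] (mod m)" by (rule euler_theorem[OF True])
  then have "\<psi> n ^ totient m = 1" using dc_cong dc_pow dc_one by metis
  then show ?thesis by simp
next
  case False then show ?thesis using dc_zero_iff by simp
qed

end

lemma finite_dchars: assumes m: "m > 0" shows "finite (dchars m)"
proof -
  define R where "R = insert (0::complex) {z. z ^ totient m = 1}"
  have fR: "finite R" unfolding R_def using m by (intro finite_insert[THEN iffD2] finite_roots_unity) (simp add: Suc_le_eq)
  have inj: "inj_on (\<lambda>\<psi>. restrict \<psi> {..<m}) (dchars m)"
  proof (rule inj_onI)
    fix \<psi>1 \<psi>2 assume h: "\<psi>1 \<in> dchars m" "\<psi>2 \<in> dchars m" "restrict \<psi>1 {..<m} = restrict \<psi>2 {..<m}"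
    show "\<psi>1 = \<psi>2"
    proof
      fix n
      have "n mod m < m" using m by simp
      then have "\<psi>1 (n mod m) = \<psi>2 (n mod m)" using h(3) by (metis lessThan_iff restrict_apply')
      then show "\<psi>1 n = \<psi>2 n" using h(1,2) dc_mod unfolding dchars_def by (metis mem_Collect_eq)
    qed
  qed
  have "(\<lambda>\<psi>. restrict \<psi> {..<m}) ` dchars m \<subseteq> PiE {..<m} (\<lambda>_. R)"
  proof (rule image_subsetI)
    fix \<psi> assume "\<psi> \<in> dchars m"
    then have dcp: "dirichlet_char m \<psi>" by (simp add: dchars_def)
    show "restrict \<psi> {..<m} \<in> PiE {..<m} (\<lambda>_. R)"
      unfolding restrict_PiE_iff using dc_root[OF dcp] unfolding R_def by blast
  qed
  moreover have "finite (PiE {..<m} (\<lambda>_. R))" using fR by (simp add: finite_PiE)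
  ultimately show ?thesis using inj inj_on_finite by blast
qed

definition pchar :: "nat \<Rightarrow> nat \<Rightarrow> complex" where
  "pchar m n = (if coprime n m then 1 else 0)"

lemma pchar_in: assumes m: "m > 0" shows "pchar m \<in> dchars m"
  unfolding dchars_def dirichlet_char_def pchar_def
proof (intro CollectI conjI allI)
  fix n
  have "coprime (n + m) m \<longleftrightarrow> coprime n m"
    using m coprime_mod_left_iff[of m "n + m"] coprime_mod_left_iff[of m n] by simp
  then show "(if coprime (n + m) m then 1 else 0 :: complex) = (if coprime n m then 1 else 0)" by simp
qed (use m in auto)

lemma dchars_mult:
  assumes "\<psi>1 \<in> dchars m" "\<psi>2 \<in> dchars m" shows "(\<lambda>n. \<psi>1 n * \<psi>2 n) \<in> dchars m"
  using assms unfolding dchars_def dirichlet_char_def by (auto simp: algebra_simps)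

lemma dchars_cnj:
  assumes "\<psi> \<in> dchars m" shows "(\<lambda>n. cnj (\<psi> n)) \<in> dchars m"
  using assms unfolding dchars_def dirichlet_char_def by auto

lemma sum_dchars_x:
  assumes m: "m > 0" and x: "coprime x m"
  shows "(\<Sum>\<psi>\<in>dchars m. \<psi> x) = (if [x = 1] (mod m) then of_nat (card (dchars m)) else 0)"
proof (cases "[x = 1] (mod m)")
  case True
  have "\<psi> x = 1" if "\<psi> \<in> dchars m" for \<psi>
    using that True dc_cong dc_one unfolding dchars_def by (metis mem_Collect_eq)
  then have "(\<Sum>\<psi>\<in>dchars m. \<psi> x) = (\<Sum>\<psi>\<in>dchars m. 1)" by (rule sum.cong[OF refl])
  then show ?thesis using True by simp
next
  case False
  obtain \<psi>0 where p0: "\<psi>0 \<in> dchars m" "\<psi>0 x \<noteq> 1" using dchar_separate[OF m x False] by blast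
  have dc0: "dirichlet_char m \<psi>0" using p0 by (simp add: dchars_def)
  have inv1: "cnj (\<psi>0 n) * (\<psi>0 n * \<psi> n) = \<psi> n" if "\<psi> \<in> dchars m" for \<psi> n
  proof (cases "coprime n m")
    case True then show ?thesis using dc_cnj[OF dc0 True] by (simp add: mult.assoc[symmetric])
  next
    case False then show ?thesis using that dc_zero_iff unfolding dchars_def by auto
  qed
  have inv2: "\<psi>0 n * (cnj (\<psi>0 n) * \<psi> n) = \<psi> n" if "\<psi> \<in> dchars m" for \<psi> n
    using inv1[OF that, of n] by (simp add: algebra_simps)
  define f where "f \<psi> = (\<lambda>n. \<psi>0 n * \<psi> n)" for \<psi> :: "nat \<Rightarrow> complex"
  define f' where "f' \<psi> = (\<lambda>n. cnj (\<psi>0 n) * \<psi> n)" for \<psi> :: "nat \<Rightarrow> complex"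
  have bij: "bij_betw f (dchars m) (dchars m)"
  proof (rule bij_betw_byWitness[where f' = f'])
    show "\<forall>a\<in>dchars m. f' (f a) = a" using inv1 unfolding f_def f'_def by auto
    show "\<forall>a\<in>dchars m. f (f' a) = a" using inv2 unfolding f_def f'_def by auto
    show "f ` dchars m \<subseteq> dchars m" unfolding f_def using dchars_mult[OF p0(1)] by auto
    show "f' ` dchars m \<subseteq> dchars m" unfolding f'_def using dchars_mult[OF dchars_cnj[OF p0(1)]] by auto
  qed
  have "(\<Sum>\<psi>\<in>dchars m. \<psi> x) = (\<Sum>\<psi>\<in>dchars m. f \<psi> x)"
    using sum.reindex_bij_betw[OF bij, of "\<lambda>\<psi>. \<psi> x"] by simp
  also have "\<dots> = \<psi>0 x * (\<Sum>\<psi>\<in>dchars m. \<psi> x)" unfolding f_def by (simp add: sum_distrib_left)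
  finally have "(1 - \<psi>0 x) * (\<Sum>\<psi>\<in>dchars m. \<psi> x) = 0" by (simp add: algebra_simps)
  then show ?thesis using False p0(2) by simp
qed

lemma card_Tm: assumes m: "m > 0" shows "card {x. x < m \<and> coprime x m} = totient m"
proof (cases "m = 1")
  case True
  then have "{x. x < m \<and> coprime x m} = {0}" by auto
  then show ?thesis using True by simp
next
  case False
  have s1: "x \<in> totatives m" if x: "x < m" "coprime x m" for x
  proof -
    have "x \<noteq> 0"
    proof
      assume "x = 0"
      then have "m dvd 1" using x(2) by simp
      then show False using False by simp
    qed
    then show ?thesis using x by (auto simp: totatives_def)
  qed
  have s2: "x < m \<and> coprime x m" if "x \<in> totatives m" for x
    using that totatives_less[of x m] False m by (auto simp: totatives_def)
  have "{x. x < m \<and> coprime x m} = totatives m" using s1 s2 by blast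
  then show ?thesis by (simp add: totient_def)
qed

lemma sum_Tm_char:
  assumes m: "m > 0" and p: "\<psi> \<in> dchars m"
  shows "(\<Sum>x\<in>{x. x < m \<and> coprime x m}. \<psi> x) =
         (if \<psi> = pchar m then of_nat (card {x. x < m \<and> coprime x m}) else 0)"
proof -
  define T where "T = {x. x < m \<and> coprime x m}"
  have dcp: "dirichlet_char m \<psi>" using p by (simp add: dchars_def)
  show ?thesis
  proof (cases "\<psi> = pchar m")
    case True
    then have "(\<Sum>x\<in>T. \<psi> x) = (\<Sum>x\<in>T. 1)" by (intro sum.cong) (auto simp: T_def pchar_def)
    then show ?thesis using True by (simp add: T_def)
  next
    case False
    have "\<exists>y. coprime y m \<and> \<psi> y \<noteq> 1"
    proof (rule ccontr)
      assume "\<not> ?thesis"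
      then have h: "\<And>y. coprime y m \<Longrightarrow> \<psi> y = 1" by blast
      have "\<psi> = pchar m"
      proof
        fix n show "\<psi> n = pchar m n"
          using h[of n] dc_zero_iff[OF dcp, of n] by (auto simp: pchar_def)
      qed
      then show False using False by simp
    qed
    then obtain y where y: "coprime y m" "\<psi> y \<noteq> 1" by blast
    define h where "h x = (y * x) mod m" for x
    have hT: "h ` T \<subseteq> T" unfolding h_def T_def using m y by auto
    have inj: "inj_on h T"
    proof (rule inj_onI)
      fix x1 x2 assume x: "x1 \<in> T" "x2 \<in> T" "h x1 = h x2"
      then have "[y * x1 = y * x2] (mod m)" by (simp add: h_def cong_def)
      then have "[x1 = x2] (mod m)" using cong_mult_lcancel_nat[OF y(1)] by simp
      then show "x1 = x2" using x by (simp add: cong_def T_def)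
    qed
    have hTe: "h ` T = T" using endo_inj_surj[OF _ hT inj] by (simp add: T_def)
    have "(\<Sum>x\<in>T. \<psi> x) = (\<Sum>x\<in>h ` T. \<psi> x)" using hTe by simp
    also have "\<dots> = (\<Sum>x\<in>T. \<psi> (h x))" using sum.reindex[OF inj] by simp
    also have "\<dots> = (\<Sum>x\<in>T. \<psi> y * \<psi> x)"
    proof (rule sum.cong[OF refl])
      fix x show "\<psi> (h x) = \<psi> y * \<psi> x"
        unfolding h_def using dc_mod[OF dcp, of "y * x"] dc_mult[OF dcp] by simp
    qed
    also have "\<dots> = \<psi> y * (\<Sum>x\<in>T. \<psi> x)" by (simp add: sum_distrib_left)
    finally have "(1 - \<psi> y) * (\<Sum>x\<in>T. \<psi> x) = 0" by (simp add: algebra_simps)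
    then have "(\<Sum>x\<in>T. \<psi> x) = 0" using y(2) by simp
    then show ?thesis using False by (simp add: T_def)
  qed
qed

lemma card_dchars: assumes m: "m > 0" shows "card (dchars m) = totient m"
proof -
  define T where "T = {x. x < m \<and> coprime x m}"
  have fT: "finite T" by (simp add: T_def)
  have fD: "finite (dchars m)" by (rule finite_dchars[OF m])
  have "(\<Sum>\<psi>\<in>dchars m. \<Sum>x\<in>T. \<psi> x) = (\<Sum>\<psi>\<in>dchars m. if \<psi> = pchar m then of_nat (card T) else 0)"
    using sum_Tm_char[OF m] unfolding T_def by (intro sum.cong) auto
  also have "\<dots> = of_nat (card T)" using pchar_in[OF m] fD by (simp add: sum.delta)
  finally have A: "(\<Sum>\<psi>\<in>dchars m. \<Sum>x\<in>T. \<psi> x) = of_nat (card T)" .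
  have "(\<Sum>x\<in>T. \<Sum>\<psi>\<in>dchars m. \<psi> x) = (\<Sum>x\<in>T. if x = 1 mod m then of_nat (card (dchars m)) else 0)"
  proof (rule sum.cong[OF refl])
    fix x assume x: "x \<in> T"
    have "[x = 1] (mod m) \<longleftrightarrow> x = 1 mod m" using x by (simp add: cong_def T_def)
    then show "(\<Sum>\<psi>\<in>dchars m. \<psi> x) = (if x = 1 mod m then of_nat (card (dchars m)) else 0)"
      using sum_dchars_x[OF m, of x] x by (simp add: T_def)
  qed
  also have "\<dots> = of_nat (card (dchars m))"
  proof -
    have "1 mod m \<in> T" using m by (cases "m = 1") (auto simp: T_def)
    then show ?thesis using fT by (simp add: sum.delta)
  qed
  finally have B: "(\<Sum>x\<in>T. \<Sum>\<psi>\<in>dchars m. \<psi> x) = of_nat (card (dchars m))" .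
  have "(\<Sum>\<psi>\<in>dchars m. \<Sum>x\<in>T. \<psi> x) = (\<Sum>x\<in>T. \<Sum>\<psi>\<in>dchars m. \<psi> x)" by (rule sum.swap)
  then have "(of_nat (card T) :: complex) = of_nat (card (dchars m))" using A B by simp
  then have "card T = card (dchars m)" by (simp only: of_nat_eq_iff)
  then show ?thesis using card_Tm[OF m] unfolding T_def by simp
qed

lemma dchars_orth:
  assumes m: "m > 0"
  shows "(\<Sum>\<psi>\<in>dchars m. \<psi> n * cnj (\<psi> b)) =
         (if coprime b m \<and> [n = b] (mod m) then of_nat (totient m) else 0)"
proof (cases "coprime b m")
  case False
  have "\<psi> n * cnj (\<psi> b) = 0" if "\<psi> \<in> dchars m" for \<psi>
    using that False dc_zero_iff unfolding dchars_def by auto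
  then have "(\<Sum>\<psi>\<in>dchars m. \<psi> n * cnj (\<psi> b)) = 0" by (intro sum.neutral) blast
  then show ?thesis using False by simp
next
  case cb: True
  show ?thesis
  proof (cases "coprime n m")
    case False
    have "\<psi> n * cnj (\<psi> b) = 0" if "\<psi> \<in> dchars m" for \<psi>
      using that False dc_zero_iff unfolding dchars_def by auto
    then have "(\<Sum>\<psi>\<in>dchars m. \<psi> n * cnj (\<psi> b)) = 0" by (intro sum.neutral) blast
    moreover have "\<not> [n = b] (mod m)" using False cb cong_imp_coprime cong_sym by blast
    ultimately show ?thesis by simp
  next
    case cn: True
    obtain b' where b': "[b * b' = Suc 0] (mod m)" using cong_solve_coprime_nat[OF cb] by blast
    have "coprime (b * b') m" using cong_imp_coprime[OF cong_sym[OF b']] by simp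
    then have cb': "coprime b' m" by simp
    have eq: "\<psi> n * cnj (\<psi> b) = \<psi> (n * b')" if "\<psi> \<in> dchars m" for \<psi>
    proof -
      have dcp: "dirichlet_char m \<psi>" using that by (simp add: dchars_def)
      have "\<psi> b * \<psi> b' = 1" using dc_mult[OF dcp, of b b'] dc_cong[OF dcp b'] dc_one[OF dcp] by simp
      moreover have "cnj (\<psi> b) * \<psi> b = 1" by (rule dc_cnj[OF dcp cb])
      ultimately have "cnj (\<psi> b) = \<psi> b'" by (metis mult.commute mult.left_neutral mult.assoc)
      then show ?thesis by (simp add: dc_mult[OF dcp])
    qed
    have "(\<Sum>\<psi>\<in>dchars m. \<psi> n * cnj (\<psi> b)) = (\<Sum>\<psi>\<in>dchars m. \<psi> (n * b'))"
      using eq by (rule sum.cong[OF refl])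
    also have "\<dots> = (if [n * b' = 1] (mod m) then of_nat (card (dchars m)) else 0)"
      using sum_dchars_x[OF m, of "n * b'"] cn cb' by simp
    also have "[n * b' = 1] (mod m) \<longleftrightarrow> [n = b] (mod m)"
    proof
      assume h: "[n * b' = 1] (mod m)"
      have "[n * b' * b = 1 * b] (mod m)" using cong_mult[OF h cong_refl] .
      moreover have "[n * (b * b') = n * 1] (mod m)" using cong_mult[OF cong_refl b'] by simp
      ultimately show "[n = b] (mod m)"
        by (metis (no_types, lifting) cong_sym cong_trans mult.assoc mult.commute mult_1)
    next
      assume h: "[n = b] (mod m)"
      have "[n * b' = b * b'] (mod m)" using cong_mult[OF h cong_refl] .
      then show "[n * b' = 1] (mod m)" using b' cong_trans by simp
    qed
    finally show ?thesis using cb card_dchars[OF m] by simp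
  qed
qed

lemma card_pf_bound:
  fixes q :: nat assumes q: "q > 0"
  shows "real (card (prime_factors q)) * ln 2 \<le> ln (real q)"
proof -
  have pf: "prime p" "multiplicity p q > 0" if "p \<in> prime_factors q" for p
    using that prime_factors_multiplicity[of q] by auto
  have "(\<Prod>p\<in>prime_factors q. (2::nat)) \<le> (\<Prod>p\<in>prime_factors q. p)"
    by (rule prod_mono) (use pf prime_ge_2_nat in auto)
  also have "\<dots> \<le> (\<Prod>p\<in>prime_factors q. p ^ multiplicity p q)"
  proof (rule prod_mono)
    fix p assume "p \<in> prime_factors q"
    then have "prime p" "multiplicity p q > 0" using pf by auto
    moreover have "1 \<le> p" using \<open>prime p\<close> prime_gt_0_nat by (simp add: Suc_le_eq)
    ultimately show "0 \<le> p \<and> p \<le> p ^ multiplicity p q"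
      using self_le_power[of p "multiplicity p q"] by simp
  qed
  also have "\<dots> = q" using prod_prime_factors[of q] q by simp
  finally have "2 ^ card (prime_factors q) \<le> q" by simp
  then have "real (2 ^ card (prime_factors q)) \<le> real q" by (simp only: of_nat_le_iff)
  then have "ln (real (2 ^ card (prime_factors q))) \<le> ln (real q)"
    using q by (subst ln_le_cancel_iff) (simp_all del: of_nat_power)
  then show ?thesis by (simp add: ln_realpow)
qed

lemma per_prime_bound:
  fixes p X :: nat assumes p: "prime p" and X: "X \<ge> 1"
  shows "(\<Sum>n\<in>{1..X}. if p dvd n then mangoldt n else 0) \<le> ln (real X)"
proof -
  define A where "A = {j::nat. p ^ j \<le> X}"
  have p2: "p \<ge> 2" using prime_ge_2_nat[OF p] .
  have Afin: "finite A"
  proof (rule finite_subset)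
    show "A \<subseteq> {..X}"
    proof
      fix j assume "j \<in> A"
      then have "p ^ j \<le> X" by (simp add: A_def)
      moreover have "j < 2 ^ j" by (rule less_exp)
      moreover have "(2::nat) ^ j \<le> p ^ j" using p2 by (simp add: power_mono)
      ultimately have "j \<le> X" by linarith
      then show "j \<in> {..X}" by simp
    qed
  qed simp
  have A0: "0 \<in> A" using X by (simp add: A_def)
  define J where "J = Max A"
  have pJ: "p ^ J \<le> X" using Max_in[OF Afin] A0 unfolding J_def A_def by blast
  have Jmax: "j \<le> J" if "p ^ j \<le> X" for j using Max_ge[OF Afin] that unfolding J_def A_def by blast
  define f where "f n = (if p dvd n then mangoldt n else 0 :: real)" for n
  define Dv where "Dv = {n. n dvd p ^ J}"
  have Dvfin: "finite Dv" unfolding Dv_def using p by (intro finite_divisors_nat) (simp add: prime_gt_0_nat)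
  have key: "n dvd p ^ J" if "n \<in> {1..X}" "f n \<noteq> 0" for n
  proof -
    have "p dvd n" "mangoldt n \<noteq> (0::real)" using that by (auto simp: f_def split: if_splits)
    then have "primepow n" by (auto simp: mangoldt_def split: if_splits)
    then obtain p' k where pk: "prime p'" "k > 0" "n = p' ^ k" by (auto simp: primepow_def)
    then have "p dvd p'" using \<open>p dvd n\<close> prime_dvd_power[OF p] by blast
    then have "p = p'" using primes_dvd_imp_eq[OF p pk(1)] by blast
    then have "p ^ k \<le> X" using pk that by simp
    then show ?thesis using Jmax pk \<open>p = p'\<close> by (simp add: le_imp_power_dvd)
  qed
  have "(\<Sum>n\<in>{1..X}. f n) = (\<Sum>n\<in>{1..X} \<inter> Dv. f n)"
    by (rule sum.mono_neutral_right) (use key in \<open>auto simp: Dv_def\<close>)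
  also have "\<dots> \<le> (\<Sum>n\<in>Dv. f n)"
    by (rule sum_mono2[OF Dvfin]) (auto simp: f_def mangoldt_nonneg)
  also have "\<dots> \<le> (\<Sum>n\<in>Dv. mangoldt n)"
    by (rule sum_mono) (auto simp: f_def mangoldt_nonneg)
  also have "\<dots> = ln (real (p ^ J))"
    unfolding Dv_def using mangoldt_sum[of "p ^ J", where 'a = real] p by (simp add: prime_gt_0_nat)
  also have "\<dots> \<le> ln (real X)"
  proof -
    have "real (p ^ J) \<le> real X" using pJ by (simp only: of_nat_le_iff)
    moreover have "0 < real (p ^ J)" using p by (simp add: prime_gt_0_nat)
    ultimately show ?thesis using X by (subst ln_le_cancel_iff) (simp_all del: of_nat_power)
  qed
  finally show ?thesis unfolding f_def .
qed

lemma noncoprime_bound: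
  fixes q X :: nat assumes q: "q > 0" and X: "X \<ge> 1"
  shows "(\<Sum>n\<in>{1..X}. if \<not> coprime n q then mangoldt n else 0) \<le> real (card (prime_factors q)) * ln (real X)"
proof -
  have "(\<Sum>n\<in>{1..X}. if \<not> coprime n q then mangoldt n else 0)
      \<le> (\<Sum>n\<in>{1..X}. \<Sum>p\<in>prime_factors q. if p dvd n then mangoldt n else 0 :: real)"
  proof (rule sum_mono)
    fix n assume n: "n \<in> {1..X}"
    show "(if \<not> coprime n q then mangoldt n else 0) \<le> (\<Sum>p\<in>prime_factors q. if p dvd n then mangoldt n else 0 :: real)"
    proof (cases "\<not> coprime n q \<and> mangoldt n \<noteq> (0::real)")
      case False
      then show ?thesis by (auto intro!: sum_nonneg simp: mangoldt_nonneg)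
    next
      case True
      then have "primepow n" by (auto simp: mangoldt_def split: if_splits)
      then obtain p k where pk: "prime p" "k > 0" "n = p ^ k" by (auto simp: primepow_def)
      then have "\<not> coprime p q" using True by simp
      then have "p dvd q" using prime_imp_coprime[OF pk(1)] by blast
      then have pq: "p \<in> prime_factors q" using q pk by (simp add: in_prime_factors_iff)
      have "(if p dvd n then mangoldt n else 0 :: real) \<le> (\<Sum>p\<in>prime_factors q. if p dvd n then mangoldt n else 0 :: real)"
        by (rule member_le_sum[OF pq]) (simp_all add: mangoldt_nonneg)
      then show ?thesis using True pk by simp
    qed
  qed
  also have "\<dots> = (\<Sum>p\<in>prime_factors q. \<Sum>n\<in>{1..X}. if p dvd n then mangoldt n else 0 :: real)"
    by (rule sum.swap)
  also have "\<dots> \<le> (\<Sum>p\<in>prime_factors q. ln (real X))"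
    by (rule sum_mono) (use per_prime_bound X in \<open>simp add: in_prime_factors_iff\<close>)
  also have "\<dots> = real (card (prime_factors q)) * ln (real X)" by simp
  finally show ?thesis .
qed

lemma e_add: "e (x + y) = e x * e y"
  unfolding e_def by (simp add: cis_mult distrib_left)

lemma e_nat: "e (real n) = 1"
  unfolding e_def by (rule cis_multiple_2pi) simp

lemma e_shift: "e (x - real n) = e x"
proof -
  have "e (x - real n) * e (real n) = e x" using e_add[of "x - real n" "real n"] by simp
  then show ?thesis using e_nat by simp
qed

lemma norm_e [simp]: "norm (e x) = 1" unfolding e_def by simp

theorem lemma4p2:
  "\<exists>C::real. \<forall>(N::nat) (a::nat) (d::nat) (q::nat) (\<kappa>::real).
     N > 0 \<longrightarrow> a > 0 \<longrightarrow> d > 0 \<longrightarrow> q > 0 \<longrightarrow> -1/2 \<le> \<kappa> \<longrightarrow> \<kappa> \<le> 1/2 \<longrightarrow>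
     norm (F_hat N d (real a / real q + \<kappa>)
        - (1 / of_nat (totient (d * q))) *
          (\<Sum>\<psi>\<in>dchars (d * q).
             e (\<kappa> / real d) * S_sum (real (d * N + 1)) (\<kappa> / real d) \<psi> * G_sum a q d \<psi>))
     \<le> C * ln (real (d * N) + 1) * ln (real q)"
proof (intro exI[of _ "1 / ln 2"] allI impI)
  fix N a d q :: nat and \<kappa> :: real
  assume N: "N > 0" and a: "a > 0" and d: "d > 0" and q: "q > 0"
  define X where "X = d * N + 1"
  have D0: "d * q > 0" using d q by simp
  define T where "T n m = e (\<kappa> / real d) * mangoldt n * e (- real n * (\<kappa> / real d)) *
                          e (- real a * real m / real q)" for n m :: nat
  define P where "P n m = (coprime (d * m + 1) (d * q) \<and> [n = d * m + 1] (mod (d * q)))" for n m :: nat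
  define K where "K = {k. k \<le> N \<and> coprime (d * k + 1) (d * q)}"
  define h where "h k = (mangoldt (d * k + 1) :: complex) * e (- real a * real k / real q) * e (- (real k * \<kappa>))"
    for k :: nat
  have S_eq: "S_sum (real (d * N + 1)) (\<kappa> / real d) \<psi> =
      (\<Sum>n\<in>{1..X}. mangoldt n * \<psi> n * e (- real n * (\<kappa> / real d)))" for \<psi>
  proof -
    have "nat \<lfloor>real (d * N + 1)\<rfloor> = X" unfolding X_def by (simp only: floor_of_nat nat_int)
    then show ?thesis unfolding S_sum_def by simp
  qed
  have main1: "(\<Sum>\<psi>\<in>dchars (d * q). e (\<kappa> / real d) * S_sum (real (d * N + 1)) (\<kappa> / real d) \<psi> * G_sum a q d \<psi>)
      = (\<Sum>n\<in>{1..X}. \<Sum>m<q. T n m * (\<Sum>\<psi>\<in>dchars (d * q). \<psi> n * cnj (\<psi> (d * m + 1))))"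
  proof -
    have "(\<Sum>\<psi>\<in>dchars (d * q). e (\<kappa> / real d) * S_sum (real (d * N + 1)) (\<kappa> / real d) \<psi> * G_sum a q d \<psi>)
        = (\<Sum>\<psi>\<in>dchars (d * q). \<Sum>n\<in>{1..X}. \<Sum>m<q. T n m * (\<psi> n * cnj (\<psi> (d * m + 1))))"
    proof (rule sum.cong[OF refl])
      fix \<psi>
      have "e (\<kappa> / real d) * S_sum (real (d * N + 1)) (\<kappa> / real d) \<psi> * G_sum a q d \<psi>
          = e (\<kappa> / real d) * ((\<Sum>n\<in>{1..X}. mangoldt n * \<psi> n * e (- real n * (\<kappa> / real d))) *
              (\<Sum>m<q. e (- real a * real m / real q) * cnj (\<psi> (d * m + 1))))"
        unfolding S_eq G_sum_def by (simp only: mult.assoc)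
      also have "\<dots> = (\<Sum>n\<in>{1..X}. \<Sum>m<q. e (\<kappa> / real d) * ((mangoldt n * \<psi> n * e (- real n * (\<kappa> / real d))) *
              (e (- real a * real m / real q) * cnj (\<psi> (d * m + 1)))))"
        by (subst sum_product) (simp only: sum_distrib_left)
      also have "\<dots> = (\<Sum>n\<in>{1..X}. \<Sum>m<q. T n m * (\<psi> n * cnj (\<psi> (d * m + 1))))"
        unfolding T_def by (intro sum.cong refl) (simp add: mult_ac)
      finally show "e (\<kappa> / real d) * S_sum (real (d * N + 1)) (\<kappa> / real d) \<psi> * G_sum a q d \<psi>
          = (\<Sum>n\<in>{1..X}. \<Sum>m<q. T n m * (\<psi> n * cnj (\<psi> (d * m + 1))))" .
    qed
    also have "\<dots> = (\<Sum>n\<in>{1..X}. \<Sum>\<psi>\<in>dchars (d * q). \<Sum>m<q. T n m * (\<psi> n * cnj (\<psi> (d * m + 1))))"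
      by (rule sum.swap)
    also have "\<dots> = (\<Sum>n\<in>{1..X}. \<Sum>m<q. \<Sum>\<psi>\<in>dchars (d * q). T n m * (\<psi> n * cnj (\<psi> (d * m + 1))))"
      by (rule sum.cong[OF refl], rule sum.swap)
    also have "\<dots> = (\<Sum>n\<in>{1..X}. \<Sum>m<q. T n m * (\<Sum>\<psi>\<in>dchars (d * q). \<psi> n * cnj (\<psi> (d * m + 1))))"
      by (simp add: sum_distrib_left)
    finally show ?thesis .
  qed
  have main2: "(1 / of_nat (totient (d * q))) *
          (\<Sum>\<psi>\<in>dchars (d * q). e (\<kappa> / real d) * S_sum (real (d * N + 1)) (\<kappa> / real d) \<psi> * G_sum a q d \<psi>)
      = (\<Sum>n\<in>{1..X}. \<Sum>m<q. if P n m then T n m else 0)"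
  proof -
    have tot0: "(of_nat (totient (d * q)) :: complex) \<noteq> 0" using D0 by simp
    have "(\<Sum>n\<in>{1..X}. \<Sum>m<q. T n m * (\<Sum>\<psi>\<in>dchars (d * q). \<psi> n * cnj (\<psi> (d * m + 1))))
        = (\<Sum>n\<in>{1..X}. \<Sum>m<q. of_nat (totient (d * q)) * (if P n m then T n m else 0))"
      unfolding dchars_orth[OF D0] P_def by (intro sum.cong refl) simp
    also have "\<dots> = of_nat (totient (d * q)) * (\<Sum>n\<in>{1..X}. \<Sum>m<q. if P n m then T n m else 0)"
      by (simp add: sum_distrib_left)
    finally show ?thesis using main1 tot0 by simp
  qed
  define f where "f k = (d * k + 1, k mod q)" for k :: nat
  have injf: "inj_on f K" unfolding f_def using d by (intro inj_onI) auto
  have setEq: "{p \<in> {1..X} \<times> {..<q}. P (fst p) (snd p)} = f ` K"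
  proof (rule equalityI; rule subsetI)
    fix p assume "p \<in> {p \<in> {1..X} \<times> {..<q}. P (fst p) (snd p)}"
    then obtain n m where p: "p = (n, m)" "n \<in> {1..X}" "m < q" "P n m" by auto
    have cop: "coprime (d * m + 1) (d * q)" and cg: "[n = d * m + 1] (mod (d * q))" using p(4) by (auto simp: P_def)
    have "[n = d * m + 1] (mod d)" using cong_dvd_modulus_nat[OF cg] by simp
    moreover have "[d * m + 1 = 1] (mod d)" unfolding cong_def by (metis add.commute mod_mult_self2)
    ultimately have "[n = 1] (mod d)" by (rule cong_trans)
    then have "d dvd (n - 1)" using p(2) by (simp add: cong_altdef_nat)
    then obtain k0 where k0: "n - 1 = d * k0" by (auto elim: dvdE)
    have "n = (n - 1) + 1" using p(2) by simp
    then have nk: "n = d * k0 + 1" using k0 by simp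
    have "[d * k0 + 1 = d * m + 1] (mod (d * q))" using cg nk by simp
    then have "[d * k0 = d * m] (mod (d * q))" using cong_add_rcancel_nat[of "d * k0" 1 "d * m" "d * q"] by blast
    then have "d * (k0 mod q) = d * (m mod q)" by (simp add: cong_def mod_mult_mult1)
    then have km: "k0 mod q = m" using d p(3) by simp
    have "d * k0 \<le> d * N" using p(2) nk unfolding X_def by simp
    then have kN: "k0 \<le> N" using d by simp
    have "coprime (d * k0 + 1) (d * q)" using cong_imp_coprime[OF cong_sym[OF cg] cop] nk by simp
    then have "k0 \<in> K" using kN by (simp add: K_def)
    moreover have "p = f k0" using p(1) nk km by (simp add: f_def)
    ultimately show "p \<in> f ` K" by blast
  next
    fix p assume "p \<in> f ` K"
    then obtain k where k: "k \<in> K" "p = f k" by blast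
    have kN: "k \<le> N" and cop: "coprime (d * k + 1) (d * q)" using k(1) by (auto simp: K_def)
    have "d * k + 1 = (d * (k mod q) + 1) + (d * q) * (k div q)"
    proof -
      have "d * k + 1 = d * (k mod q + q * (k div q)) + 1" by (simp only: mod_mult_div_eq)
      also have "\<dots> = (d * (k mod q) + 1) + (d * q) * (k div q)" by (simp only: distrib_left mult.assoc add_ac)
      finally show ?thesis .
    qed
    then have cg: "[d * k + 1 = d * (k mod q) + 1] (mod (d * q))"
      unfolding cong_def by (metis mod_mult_self2)
    have "d * k \<le> d * N" using kN by simp
    then have "d * k + 1 \<in> {1..X}" unfolding X_def by simp
    moreover have "k mod q < q" using q by simp
    moreover have "P (d * k + 1) (k mod q)"
      unfolding P_def using cg cong_imp_coprime[OF cg cop] by simp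
    ultimately show "p \<in> {p \<in> {1..X} \<times> {..<q}. P (fst p) (snd p)}" using k(2) by (simp add: f_def)
  qed
  have main3: "(\<Sum>n\<in>{1..X}. \<Sum>m<q. if P n m then T n m else 0) = (\<Sum>k\<in>K. T (d * k + 1) (k mod q))"
  proof -
    have "(\<Sum>n\<in>{1..X}. \<Sum>m<q. if P n m then T n m else 0)
        = (\<Sum>p\<in>{1..X} \<times> {..<q}. if P (fst p) (snd p) then T (fst p) (snd p) else 0)"
      by (subst sum.cartesian_product) (simp add: case_prod_beta)
    also have "\<dots> = (\<Sum>p\<in>{p \<in> {1..X} \<times> {..<q}. P (fst p) (snd p)}. T (fst p) (snd p))"
      by (subst sum.inter_filter) simp_all
    also have "\<dots> = (\<Sum>p\<in>f ` K. T (fst p) (snd p))" using setEq by simp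
    also have "\<dots> = (\<Sum>k\<in>K. T (d * k + 1) (k mod q))"
      by (subst sum.reindex[OF injf]) (simp add: f_def)
    finally show ?thesis .
  qed
  have Teq: "T (d * k + 1) (k mod q) = h k" for k
  proof -
    have a1: "\<kappa> / real d + - real (d * k + 1) * (\<kappa> / real d) = - (real k * \<kappa>)"
      using d by (simp add: field_simps)
    have "real k = real (k mod q) + real q * real (k div q)"
      by (metis of_nat_add of_nat_mult mod_mult_div_eq)
    then have a2: "- real a * real k / real q = - real a * real (k mod q) / real q - real (a * (k div q))"
      using q by (simp add: field_simps)
    have "T (d * k + 1) (k mod q) = mangoldt (d * k + 1) * (e (\<kappa> / real d) * e (- real (d * k + 1) * (\<kappa> / real d))) *
            e (- real a * real (k mod q) / real q)"
      unfolding T_def by (simp add: mult_ac)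
    also have "e (\<kappa> / real d) * e (- real (d * k + 1) * (\<kappa> / real d)) = e (- (real k * \<kappa>))"
      using a1 e_add by metis
    also have "e (- real a * real (k mod q) / real q) = e (- real a * real k / real q)"
      using a2 e_shift by metis
    finally show ?thesis unfolding h_def by (simp add: mult_ac)
  qed
  have Feq: "F_hat N d (real a / real q + \<kappa>) = (\<Sum>k\<in>{1..N}. h k)"
    unfolding F_hat_def h_def
  proof (rule sum.cong[OF refl])
    fix k
    have "- real k * (real a / real q + \<kappa>) = - real a * real k / real q + - (real k * \<kappa>)"
      by (simp add: field_simps)
    then show "mangoldt (d * k + 1) * e (- real k * (real a / real q + \<kappa>)) =
        mangoldt (d * k + 1) * e (- real a * real k / real q) * e (- (real k * \<kappa>))"
      using e_add by (metis mult.assoc)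
  qed
  have Meq: "(\<Sum>k\<in>K. h k) = (\<Sum>k\<in>{1..N}. if coprime (d * k + 1) (d * q) then h k else 0)"
  proof -
    have Keq: "K = {k \<in> {0..N}. coprime (d * k + 1) (d * q)}" unfolding K_def by auto
    have "(\<Sum>k\<in>K. h k) = (\<Sum>k\<in>{0..N}. if coprime (d * k + 1) (d * q) then h k else 0)"
      unfolding Keq by (rule sum.inter_filter) simp
    also have "\<dots> = (if coprime (d * 0 + 1) (d * q) then h 0 else 0) +
        (\<Sum>k\<in>{Suc 0..N}. if coprime (d * k + 1) (d * q) then h k else 0)"
      by (rule sum.atLeast_Suc_atMost) simp
    also have "h 0 = 0" unfolding h_def by simp
    finally show ?thesis by simp
  qed
  have diff: "F_hat N d (real a / real q + \<kappa>) - (\<Sum>k\<in>K. h k)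
      = (\<Sum>k\<in>{1..N}. if \<not> coprime (d * k + 1) (d * q) then h k else 0)"
  proof -
    have "(\<Sum>k\<in>{1..N}. h k) = (\<Sum>k\<in>{1..N}. (if coprime (d * k + 1) (d * q) then h k else 0) +
                                             (if \<not> coprime (d * k + 1) (d * q) then h k else 0))"
      by (intro sum.cong refl) simp
    also have "\<dots> = (\<Sum>k\<in>{1..N}. if coprime (d * k + 1) (d * q) then h k else 0) +
                   (\<Sum>k\<in>{1..N}. if \<not> coprime (d * k + 1) (d * q) then h k else 0)"
      by (rule sum.distrib)
    finally show ?thesis using Feq Meq by simp
  qed
  have normh: "norm (h k) = mangoldt (d * k + 1)" for k
    unfolding h_def by (simp add: norm_mult)
  have cd: "coprime (d * k + 1) d" for k
  proof -
    have "[d * k + 1 = 1] (mod d)" unfolding cong_def by (metis add.commute mod_mult_self2)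
    then show "coprime (d * k + 1) d" using cong_imp_coprime[OF cong_sym] by (metis coprime_1_left)
  qed
  have cq: "coprime (d * k + 1) (d * q) \<longleftrightarrow> coprime (d * k + 1) q" for k
    using cd[of k] by simp
  have "norm (F_hat N d (real a / real q + \<kappa>)
        - (1 / of_nat (totient (d * q))) *
          (\<Sum>\<psi>\<in>dchars (d * q). e (\<kappa> / real d) * S_sum (real (d * N + 1)) (\<kappa> / real d) \<psi> * G_sum a q d \<psi>))
      = norm (\<Sum>k\<in>{1..N}. if \<not> coprime (d * k + 1) (d * q) then h k else 0)"
    by (simp only: main2 main3 Teq diff)
  also have "\<dots> \<le> (\<Sum>k\<in>{1..N}. norm (if \<not> coprime (d * k + 1) (d * q) then h k else 0))"
    by (rule norm_sum)
  also have "\<dots> = (\<Sum>k\<in>{1..N}. (\<lambda>n. if \<not> coprime n q then mangoldt n else 0 :: real) (d * k + 1))"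
    by (intro sum.cong refl) (use cd in \<open>simp add: normh\<close>)
  also have "\<dots> = (\<Sum>n\<in>(\<lambda>k. d * k + 1) ` {1..N}. if \<not> coprime n q then mangoldt n else 0 :: real)"
  proof -
    have inj: "inj_on (\<lambda>k. d * k + 1) {1..N}" using d by (auto intro!: inj_onI)
    show ?thesis by (rule sum.reindex[OF inj, symmetric, unfolded comp_def])
  qed
  also have "\<dots> \<le> (\<Sum>n\<in>{1..X}. if \<not> coprime n q then mangoldt n else 0 :: real)"
  proof (rule sum_mono2)
    show "(\<lambda>k. d * k + 1) ` {1..N} \<subseteq> {1..X}" unfolding X_def by auto
  qed (auto simp: mangoldt_nonneg)
  also have "\<dots> \<le> real (card (prime_factors q)) * ln (real X)"
    by (rule noncoprime_bound[OF q]) (simp add: X_def)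
  also have "\<dots> \<le> 1 / ln 2 * ln (real (d * N) + 1) * ln (real q)"
  proof -
    have lX: "ln (real X) = ln (real (d * N) + 1)" unfolding X_def by (simp add: add.commute)
    have lX0: "0 \<le> ln (real (d * N) + 1)" by simp
    have "real (card (prime_factors q)) \<le> ln (real q) / ln 2"
      using card_pf_bound[OF q] by (simp add: field_simps)
    then have "real (card (prime_factors q)) * ln (real (d * N) + 1) \<le> ln (real q) / ln 2 * ln (real (d * N) + 1)"
      using lX0 by (rule mult_right_mono)
    then have "real (card (prime_factors q)) * ln (real X) \<le> ln (real q) / ln 2 * ln (real (d * N) + 1)"
      using lX by simp
    then show ?thesis by (simp add: field_simps)
  qed
  finally show "norm (F_hat N d (real a / real q + \<kappa>)
        - (1 / of_nat (totient (d * q))) *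
          (\<Sum>\<psi>\<in>dchars (d * q). e (\<kappa> / real d) * S_sum (real (d * N + 1)) (\<kappa> / real d) \<psi> * G_sum a q d \<psi>))
     \<le> 1 / ln 2 * ln (real (d * N) + 1) * ln (real q)" .
qed

end
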